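(* Let $k\ge 1$ and let $T_{2,k}$ be the balanced binary tree of depth $k$, i.e. the rooted tree with $2^{k}-1$ vertices in which the root and every vertex at distance at most $k-2$ from the root has exactly two children, and all leaves are at distance $k-1$ from the root. Then \[ \pi_{leaf}(T_{2,k})=\pi(T_{2,k})=\frac{2^{k}+(-1)^{k-1}}{3}, \] the $(k-1)$-th Jacobsthal number.
   Context: Let $G$ be a finite simple undirected graph. For $S\subseteq V(G)$, the propagation process starting from $S$ is as follows: set $P(0)=S$; at each step one may add to the current set $P$ a vertex $w\notin P$ provided there is a vertex $v\in P$ adjacent to $w$ such that every neighbour of $v$ other than $w$ already lies in $P$ (i.e. $w$ is the unique neighbour of $v$ outside $P$). We say $S$ propagates in $G$ if, by repeated application of this rule, the current set can eventually become all of $V(G)$. $\pi(G)$ denotes the minimum cardinality of a set $S\subseteq V(G)$ that propagates in $G$. For a tree $T$, $\pi_{leaf}(T)$ denotes the minimum cardinality of a set consisting only of leaves (vertices of degree one) of $T$ that propagates in $T$. *)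

theory Defs
  imports Complex_Main
begin

text \<open>Graphs are given by a vertex set V and an adjacency relation E
  (symmetric, irreflexive for simple graphs).\<close>

definition nbrs :: "'a set \<Rightarrow> ('a \<Rightarrow> 'a \<Rightarrow> bool) \<Rightarrow> 'a \<Rightarrow> 'a set" where
  "nbrs V E v = {u \<in> V. E v u}"

definition prop_step :: "'a set \<Rightarrow> ('a \<Rightarrow> 'a \<Rightarrow> bool) \<Rightarrow> 'a set \<Rightarrow> 'a set \<Rightarrow> bool" where
  "prop_step V E P P' \<longleftrightarrow>
     (\<exists>v w. v \<in> P \<and> w \<in> V \<and> w \<notin> P \<and> E v w \<and>
            (\<forall>u \<in> nbrs V E v. u \<noteq> w \<longrightarrow> u \<in> P) \<and> P' = insert w P)"

definition propagates :: "'a set \<Rightarrow> ('a \<Rightarrow> 'a \<Rightarrow> bool) \<Rightarrow> 'a set \<Rightarrow> bool" where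
  "propagates V E S \<longleftrightarrow> S \<subseteq> V \<and> (prop_step V E)\<^sup>*\<^sup>* S V"

definition prop_num :: "'a set \<Rightarrow> ('a \<Rightarrow> 'a \<Rightarrow> bool) \<Rightarrow> nat" where
  "prop_num V E = (LEAST n. \<exists>S. propagates V E S \<and> card S = n)"

text \<open>Leaves: vertices of degree one; by convention the only vertex of a
  one-vertex tree also counts as a leaf.\<close>
definition is_leaf :: "'a set \<Rightarrow> ('a \<Rightarrow> 'a \<Rightarrow> bool) \<Rightarrow> 'a \<Rightarrow> bool" where
  "is_leaf V E v \<longleftrightarrow> v \<in> V \<and> (card (nbrs V E v) = 1 \<or> V = {v})"

definition prop_leaf_num :: "'a set \<Rightarrow> ('a \<Rightarrow> 'a \<Rightarrow> bool) \<Rightarrow> nat" where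
  "prop_leaf_num V E =
     (LEAST n. \<exists>S. S \<subseteq> {v. is_leaf V E v} \<and> propagates V E S \<and> card S = n)"

text \<open>Balanced binary tree of depth k in heap numbering: vertices 1 .. 2^k - 1,
  the children of i are 2i and 2i+1 (root 1, leaves at depth k-1).\<close>
definition bintree_V :: "nat \<Rightarrow> nat set" where
  "bintree_V k = {1..<2^k}"

definition bintree_E :: "nat \<Rightarrow> nat \<Rightarrow> nat \<Rightarrow> bool" where
  "bintree_E k i j \<longleftrightarrow> i \<in> bintree_V k \<and> j \<in> bintree_V k \<and> (i = j div 2 \<or> j = i div 2)"

end

theory Submission
  imports Defs
begin


definition reach :: "'a set \<Rightarrow> ('a \<Rightarrow> 'a \<Rightarrow> bool) \<Rightarrow> 'a set \<Rightarrow> 'a set \<Rightarrow> bool" where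
  "reach V E P Q \<longleftrightarrow> (\<exists>P'. (prop_step V E)\<^sup>*\<^sup>* P P' \<and> Q \<subseteq> P')"

lemma step_incr: "prop_step V E P P' \<Longrightarrow> P \<subseteq> P'"
  by (auto simp: prop_step_def)

lemma steps_incr: "(prop_step V E)\<^sup>*\<^sup>* P P' \<Longrightarrow> P \<subseteq> P'"
  by (induction rule: rtranclp_induct) (auto dest: step_incr)

lemma steps_in_V: "(prop_step V E)\<^sup>*\<^sup>* P P' \<Longrightarrow> P \<subseteq> V \<Longrightarrow> P' \<subseteq> V"
  by (induction rule: rtranclp_induct) (auto simp: prop_step_def)

lemma steps_mono:
  assumes "(prop_step V E)\<^sup>*\<^sup>* P R" "P \<subseteq> Q"
  shows "\<exists>R'. (prop_step V E)\<^sup>*\<^sup>* Q R' \<and> R \<subseteq> R'"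
  using assms
proof (induction rule: rtranclp_induct)
  case base thus ?case by blast
next
  case (step R R2)
  then obtain R' where 1: "(prop_step V E)\<^sup>*\<^sup>* Q R'" "R \<subseteq> R'" by blast
  from step.hyps(2) obtain v w where vw: "v \<in> R" "w \<in> V" "w \<notin> R" "E v w"
     "\<forall>u\<in>nbrs V E v. u \<noteq> w \<longrightarrow> u \<in> R" "R2 = insert w R"
    unfolding prop_step_def by blast
  show ?case
  proof (cases "w \<in> R'")
    case True thus ?thesis using 1 vw by auto
  next
    case False
    have "prop_step V E R' (insert w R')" unfolding prop_step_def
      apply (rule exI[of _ v], rule exI[of _ w]) using vw 1 False by auto
    hence "(prop_step V E)\<^sup>*\<^sup>* Q (insert w R')" using 1 by (meson rtranclp.rtrancl_into_rtrancl)
    thus ?thesis using 1 vw by auto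
  qed
qed

lemma reach_sub: "Q \<subseteq> P \<Longrightarrow> reach V E P Q"
  by (auto simp: reach_def)

lemma reach_weaken: "reach V E P Q \<Longrightarrow> Q' \<subseteq> Q \<Longrightarrow> reach V E P Q'"
  by (auto simp: reach_def)

lemma reach_addP: "reach V E P Q \<Longrightarrow> reach V E P (P \<union> Q)"
proof -
  assume "reach V E P Q"
  then obtain P' where "(prop_step V E)\<^sup>*\<^sup>* P P'" "Q \<subseteq> P'" by (auto simp: reach_def)
  moreover have "P \<subseteq> P'" using calculation(1) by (rule steps_incr)
  ultimately show ?thesis unfolding reach_def by auto
qed

lemma reach_mono: "reach V E P Q \<Longrightarrow> P \<subseteq> P2 \<Longrightarrow> reach V E P2 Q"
proof -
  assume a: "reach V E P Q" "P \<subseteq> P2"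
  then obtain P' where p: "(prop_step V E)\<^sup>*\<^sup>* P P'" "Q \<subseteq> P'" by (auto simp: reach_def)
  obtain R' where "(prop_step V E)\<^sup>*\<^sup>* P2 R'" "P' \<subseteq> R'" using steps_mono[OF p(1) a(2)] by blast
  thus ?thesis using p(2) unfolding reach_def by auto
qed

lemma reach_trans: "reach V E P Q1 \<Longrightarrow> reach V E (P \<union> Q1) Q2 \<Longrightarrow> reach V E P (Q1 \<union> Q2)"
proof -
  assume a: "reach V E P Q1" "reach V E (P \<union> Q1) Q2"
  then obtain P1 where p1: "(prop_step V E)\<^sup>*\<^sup>* P P1" "Q1 \<subseteq> P1" by (auto simp: reach_def)
  hence "P \<union> Q1 \<subseteq> P1" using steps_incr by blast
  hence "reach V E P1 Q2" using a(2) reach_mono by blast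
  then obtain P2 where p2: "(prop_step V E)\<^sup>*\<^sup>* P1 P2" "Q2 \<subseteq> P2" by (auto simp: reach_def)
  have "P1 \<subseteq> P2" using p2 steps_incr by blast
  have "(prop_step V E)\<^sup>*\<^sup>* P P2" using p1(1) p2(1) by (rule rtranclp_trans)
  moreover have "Q1 \<union> Q2 \<subseteq> P2" using p1(2) p2(2) \<open>P1 \<subseteq> P2\<close> by blast
  ultimately show ?thesis unfolding reach_def by blast
qed

lemma reach_step: "v \<in> P \<Longrightarrow> w \<in> V \<Longrightarrow> E v w \<Longrightarrow> nbrs V E v - {w} \<subseteq> P \<Longrightarrow> reach V E P {w}"
proof (cases "w \<in> P")
  case True thus ?thesis by (auto simp: reach_def)
next
  case False
  assume "v \<in> P" "w \<in> V" "E v w" "nbrs V E v - {w} \<subseteq> P"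
  hence "prop_step V E P (insert w P)" using False unfolding prop_step_def
    apply - apply (rule exI[of _ v], rule exI[of _ w]) by auto
  thus ?thesis unfolding reach_def by blast
qed



lemma lower_inv:
  assumes "(prop_step V E)\<^sup>*\<^sup>* S P" "S \<subseteq> V" "finite V" "I \<subseteq> V"
    "\<forall>x\<in>I. \<forall>y\<in>I. \<not> E x y"
  shows "card (I \<inter> P) \<le> card S + card {v \<in> (V - I) \<inter> P. nbrs V E v \<subseteq> P}"
  using assms
proof (induction rule: rtranclp_induct)
  case base
  have "finite S" using base(1,2) by (rule finite_subset)
  hence "card (I \<inter> S) \<le> card S" by (intro card_mono) auto
  thus ?case by linarith
next
  case (step P P2)
  have PV: "P \<subseteq> V" using steps_in_V[OF step.hyps(1) step.prems(1)] .
  from step.hyps(2) obtain v w where vw: "v \<in> P" "w \<in> V" "w \<notin> P" "E v w"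
     "\<forall>u\<in>nbrs V E v. u \<noteq> w \<longrightarrow> u \<in> P" "P2 = insert w P"
    unfolding prop_step_def by blast
  define D where "D = (\<lambda>P. {v \<in> (V - I) \<inter> P. nbrs V E v \<subseteq> P})"
  have IH: "card (I \<inter> P) \<le> card S + card (D P)" using step.IH step.prems unfolding D_def by blast
  have fin: "finite (D P2)" unfolding D_def using step.prems(2) by simp
  have Dm: "D P \<subseteq> D P2" unfolding D_def using vw(6) by auto
  have finP: "finite (I \<inter> P)" using PV step.prems(2) by (meson finite_Int finite_subset)
  show ?case
  proof (cases "w \<in> I")
    case True
    have "v \<notin> I" using True vw(4) step.prems(4) by blast
    moreover have "v \<in> V" using vw(1) PV by blast
    moreover have "nbrs V E v \<subseteq> P2" using vw(5,6) by blast
    ultimately have vin: "v \<in> D P2" unfolding D_def using vw(1,6) by blast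
    have "w \<in> nbrs V E v" using vw(2,4) unfolding nbrs_def by blast
    hence vout: "v \<notin> D P" unfolding D_def using vw(3) by blast
    have "card (insert v (D P)) \<le> card (D P2)"
      using vin Dm fin by (intro card_mono) auto
    moreover have "card (insert v (D P)) = Suc (card (D P))"
      using vout fin Dm by (meson card_insert_disjoint finite_subset)
    moreover have "I \<inter> P2 = insert w (I \<inter> P)" using vw(6) True by blast
    moreover have "w \<notin> I \<inter> P" using vw(3) by blast
    ultimately have "card (I \<inter> P2) \<le> card S + card (D P2)" using IH finP by simp
    thus ?thesis unfolding D_def .
  next
    case False
    have "I \<inter> P2 = I \<inter> P" using vw(6) False by blast
    moreover have "card (D P) \<le> card (D P2)" using Dm fin by (rule card_mono[rotated])
    ultimately have "card (I \<inter> P2) \<le> card S + card (D P2)" using IH by simp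
    thus ?thesis unfolding D_def .
  qed
qed

lemma lower:
  assumes "propagates V E S" "finite V" "I \<subseteq> V" "\<forall>x\<in>I. \<forall>y\<in>I. \<not> E x y"
  shows "card I \<le> card S + card (V - I)"
proof -
  have "card (I \<inter> V) \<le> card S + card {v \<in> (V - I) \<inter> V. nbrs V E v \<subseteq> V}"
    using lower_inv[of V E S V I] assms unfolding propagates_def by blast
  moreover have "I \<inter> V = I" using assms by auto
  ultimately have "card I \<le> card S + card {v \<in> (V - I) \<inter> V. nbrs V E v \<subseteq> V}" by (simp only:)
  moreover have "card {v \<in> (V - I) \<inter> V. nbrs V E v \<subseteq> V} \<le> card (V - I)"
    using assms by (intro card_mono) auto
  ultimately show ?thesis by linarith
qed



abbreviation "VV K \<equiv> bintree_V K"
abbreviation "EE K \<equiv> bintree_E K"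

lemma nbrs_sub: "nbrs (VV K) (EE K) x \<subseteq> {2*x, 2*x+1, x div 2} \<inter> VV K"
  unfolding nbrs_def bintree_E_def by auto

lemma E_par: "i \<in> VV K \<Longrightarrow> j \<in> VV K \<Longrightarrow> i = j div 2 \<Longrightarrow> EE K i j \<and> EE K j i"
  unfolding bintree_E_def by auto

definition lev :: "nat \<Rightarrow> nat \<Rightarrow> nat \<Rightarrow> bool" where
  "lev K h i \<longleftrightarrow> 2^(K-h) \<le> i \<and> i < 2^(K-h+1)"

lemma lev_V: "lev K h i \<Longrightarrow> 1 \<le> h \<Longrightarrow> h \<le> K \<Longrightarrow> i \<in> VV K"
proof -
  assume a: "lev K h i" "1 \<le> h" "h \<le> K"
  have "(2::nat)^(K-h+1) \<le> 2^K" using a by (intro power_increasing) auto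
  moreover have "(1::nat) \<le> 2^(K-h)" by simp
  ultimately show ?thesis using a unfolding lev_def bintree_V_def by auto
qed

lemma lev_kids: "lev K (Suc h) i \<Longrightarrow> Suc h \<le> K \<Longrightarrow> lev K h (2*i) \<and> lev K h (2*i+1)"
proof -
  assume a: "lev K (Suc h) i" "Suc h \<le> K"
  define m where "m = K - Suc h"
  have "K - h = Suc m" "K - Suc h = m" using a m_def by auto
  thus ?thesis using a unfolding lev_def by auto
qed

fun sub :: "nat \<Rightarrow> nat \<Rightarrow> nat set" where
  "sub i 0 = {}"
| "sub i (Suc h) = insert i (sub (2*i) h \<union> sub (2*i+1) h)"

lemma root_in_sub: "1 \<le> h \<Longrightarrow> i \<in> sub i h"
  by (cases h) auto

lemma kids_forced:
  assumes "lev K h x" "1 \<le> h" "h \<le> K"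
  shows "nbrs (VV K) (EE K) x - {x div 2} \<subseteq> sub x h"
proof
  fix y assume y: "y \<in> nbrs (VV K) (EE K) x - {x div 2}"
  hence yk: "y = 2*x \<or> y = 2*x+1" "y \<in> VV K" using nbrs_sub by blast+
  have "h \<noteq> 1"
  proof
    assume "h = 1"
    moreover obtain m where "K = Suc m" using assms by (cases K) auto
    ultimately have "2^K \<le> 2*x" using assms unfolding lev_def by auto
    thus False using yk unfolding bintree_V_def by auto
  qed
  then obtain h' where h': "h = Suc (Suc h')" using assms by (metis One_nat_def Suc_pred' less_eq_Suc_le not0_implies_Suc)
  have "2*x \<in> sub (2*x) (Suc h')" "2*x+1 \<in> sub (2*x+1) (Suc h')" by simp_all
  thus "y \<in> sub x h" using yk h' by simp blast
qed

fun Gs :: "nat \<Rightarrow> nat \<Rightarrow> nat set" and Fs :: "nat \<Rightarrow> nat \<Rightarrow> nat set" and Fp :: "nat \<Rightarrow> nat \<Rightarrow> nat set" where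
  "Gs i 0 = {}"
| "Gs i (Suc 0) = {i}"
| "Gs i (Suc (Suc h)) = Gs (2*i) (Suc h) \<union> Fs (2*i+1) (Suc h)"
| "Fs i 0 = {}"
| "Fs i (Suc 0) = {i}"
| "Fs i (Suc (Suc h)) = Gs (2*i) (Suc h) \<union> Fp (2*i+1) (Suc h)"
| "Fp i 0 = {}"
| "Fp i (Suc 0) = {}"
| "Fp i (Suc (Suc h)) = Fs (2*i) (Suc h) \<union> Fp (2*i+1) (Suc h)"



lemma main:
  fixes K :: nat
  shows "1 \<le> h \<Longrightarrow> h \<le> K \<Longrightarrow> lev K h i \<Longrightarrow>
   (\<forall>P. Gs i h \<subseteq> P \<longrightarrow> reach (VV K) (EE K) P (sub i h)) \<and>
   (\<forall>P. Fs i h \<subseteq> P \<longrightarrow> (i = 1 \<or> i div 2 \<in> P) \<longrightarrow> reach (VV K) (EE K) P (sub i h)) \<and>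
   (\<forall>P. Fp i h \<subseteq> P \<longrightarrow> i \<in> P \<longrightarrow> (i = 1 \<or> i div 2 \<in> P) \<longrightarrow> reach (VV K) (EE K) P (sub i h))"
proof (induction h arbitrary: i)
  case 0 thus ?case by simp
next
  case (Suc h)
  show ?case
  proof (cases h)
    case 0
    thus ?thesis by (auto intro: reach_sub)
  next
    case (Suc h')
    have h1: "1 \<le> h" "h \<le> K" using Suc Suc.prems by auto
    have lk: "lev K h (2*i)" "lev K h (2*i+1)" using lev_kids Suc.prems by auto
    have IHa1: "\<And>P. Gs (2*i) h \<subseteq> P \<Longrightarrow> reach (VV K) (EE K) P (sub (2*i) h)"
      and IHa2: "\<And>P. Fs (2*i) h \<subseteq> P \<Longrightarrow> (2*i = 1 \<or> (2*i) div 2 \<in> P) \<Longrightarrow> reach (VV K) (EE K) P (sub (2*i) h)"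
      using Suc.IH[OF h1 lk(1)] by blast+
    have IHb2: "\<And>P. Fs (2*i+1) h \<subseteq> P \<Longrightarrow> (2*i+1 = 1 \<or> (2*i+1) div 2 \<in> P) \<Longrightarrow> reach (VV K) (EE K) P (sub (2*i+1) h)"
      and IHb3: "\<And>P. Fp (2*i+1) h \<subseteq> P \<Longrightarrow> 2*i+1 \<in> P \<Longrightarrow> (2*i+1 = 1 \<or> (2*i+1) div 2 \<in> P) \<Longrightarrow> reach (VV K) (EE K) P (sub (2*i+1) h)"
      using Suc.IH[OF h1 lk(2)] by blast+
    have iV: "i \<in> VV K" using lev_V Suc.prems by blast
    have aV: "2*i \<in> VV K" using lev_V lk h1 by blast
    have bV: "2*i+1 \<in> VV K" using lev_V lk h1 by blast
    have Eai: "EE K (2*i) i" using E_par[OF iV aV] by simp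
    have Eib: "EE K i (2*i+1)" using E_par[OF iV bV] by simp
    define A where "A = sub (2*i) h"
    define B where "B = sub (2*i+1) h"
    have aA: "2*i \<in> A" unfolding A_def using root_in_sub h1 by blast
    have nA: "nbrs (VV K) (EE K) (2*i) - {i} \<subseteq> A"
      using kids_forced[OF lk(1) h1] unfolding A_def by simp
    have nb: "nbrs (VV K) (EE K) i - {2*i+1} \<subseteq> {2*i} \<union> ({i div 2} \<inter> VV K)"
      using nbrs_sub by blast
    have subeq: "sub i (Suc h) = insert i (A \<union> B)" unfolding A_def B_def by simp
    have X: "reach (VV K) (EE K) Q {i}" if "A \<subseteq> Q" for Q
      using reach_step[of "2*i" Q i "VV K" "EE K"] that aA iV Eai nA by blast
    have Y: "reach (VV K) (EE K) Q {2*i+1}" if "2*i \<in> Q" "i = 1 \<or> i div 2 \<in> Q" "i \<in> Q" for Q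
    proof -
      have "nbrs (VV K) (EE K) i - {2*i+1} \<subseteq> Q"
      proof
        fix u assume u: "u \<in> nbrs (VV K) (EE K) i - {2*i+1}"
        hence "u = 2*i \<or> (u = i div 2 \<and> u \<in> VV K)" using nb by blast
        moreover have "0 \<notin> VV K" unfolding bintree_V_def by simp
        ultimately show "u \<in> Q" using that by auto
      qed
      thus ?thesis using reach_step[of i Q "2*i+1" "VV K" "EE K"] that bV Eib by blast
    qed
    have G: "Gs i (Suc h) = Gs (2*i) h \<union> Fs (2*i+1) h" using Suc by simp
    have F: "Fs i (Suc h) = Gs (2*i) h \<union> Fp (2*i+1) h" using Suc by simp
    have F': "Fp i (Suc h) = Fs (2*i) h \<union> Fp (2*i+1) h" using Suc by simp
    have d1: "(2*i) div 2 = i" "(2*i+1) div 2 = i" by auto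
    have part1: "reach (VV K) (EE K) P (sub i (Suc h))" if "Gs i (Suc h) \<subseteq> P" for P
    proof -
      have r1: "reach (VV K) (EE K) P A" unfolding A_def using that G by (intro IHa1) simp
      have r2: "reach (VV K) (EE K) (P \<union> A) {i}" by (rule X) simp
      have r12: "reach (VV K) (EE K) P (A \<union> {i})" using reach_trans[OF r1 r2] .
      have r3: "reach (VV K) (EE K) (P \<union> (A \<union> {i})) B"
        unfolding B_def using that G d1 by (intro IHb2) auto
      have "reach (VV K) (EE K) P ((A \<union> {i}) \<union> B)" using reach_trans[OF r12 r3] .
      thus ?thesis using subeq by (elim reach_weaken) auto
    qed
    have part2: "reach (VV K) (EE K) P (sub i (Suc h))"
      if "Fs i (Suc h) \<subseteq> P" "i = 1 \<or> i div 2 \<in> P" for P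
    proof -
      have r1: "reach (VV K) (EE K) P A" unfolding A_def using that F by (intro IHa1) simp
      have r2: "reach (VV K) (EE K) (P \<union> A) {i}" by (rule X) simp
      have r12: "reach (VV K) (EE K) P (A \<union> {i})" using reach_trans[OF r1 r2] .
      have r3: "reach (VV K) (EE K) (P \<union> (A \<union> {i})) {2*i+1}"
        using aA that(2) by (intro Y) auto
      have r123: "reach (VV K) (EE K) P ((A \<union> {i}) \<union> {2*i+1})" using reach_trans[OF r12 r3] .
      have r4: "reach (VV K) (EE K) (P \<union> ((A \<union> {i}) \<union> {2*i+1})) B"
        unfolding B_def using that F d1 by (intro IHb3) auto
      have "reach (VV K) (EE K) P (((A \<union> {i}) \<union> {2*i+1}) \<union> B)" using reach_trans[OF r123 r4] .
      thus ?thesis using subeq by (elim reach_weaken) auto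
    qed
    have part3: "reach (VV K) (EE K) P (sub i (Suc h))"
      if "Fp i (Suc h) \<subseteq> P" "i \<in> P" "i = 1 \<or> i div 2 \<in> P" for P
    proof -
      have r1: "reach (VV K) (EE K) P A" unfolding A_def using that F' d1 by (intro IHa2) auto
      have r2: "reach (VV K) (EE K) (P \<union> A) {2*i+1}"
        using aA that(2,3) by (intro Y) auto
      have r12: "reach (VV K) (EE K) P (A \<union> {2*i+1})" using reach_trans[OF r1 r2] .
      have r3: "reach (VV K) (EE K) (P \<union> (A \<union> {2*i+1})) B"
        unfolding B_def using that F' d1 by (intro IHb3) auto
      have "reach (VV K) (EE K) P ((A \<union> {2*i+1}) \<union> B)" using reach_trans[OF r12 r3] .
      hence "reach (VV K) (EE K) P (P \<union> ((A \<union> {2*i+1}) \<union> B))" by (rule reach_addP)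
      thus ?thesis using subeq that(2) by (elim reach_weaken) auto
    qed
    show ?thesis using part1 part2 part3 by simp
  qed
qed



lemma leafsets:
  "1 \<le> h \<Longrightarrow> h \<le> K \<Longrightarrow> lev K h i \<Longrightarrow>
   (\<forall>x \<in> Gs i h \<union> Fs i h \<union> Fp i h. lev K 1 x)"
proof (induction h arbitrary: i)
  case 0 thus ?case by simp
next
  case (Suc h)
  show ?case
  proof (cases h)
    case 0 thus ?thesis using Suc.prems by simp
  next
    case (Suc h')
    have h1: "1 \<le> h" "h \<le> K" using Suc Suc.prems by auto
    have lk: "lev K h (2*i)" "lev K h (2*i+1)" using lev_kids Suc.prems by auto
    have a: "\<forall>x \<in> Gs (2*i) h \<union> Fs (2*i) h \<union> Fp (2*i) h. lev K 1 x" using Suc.IH[OF h1 lk(1)] .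
    have b: "\<forall>x \<in> Gs (2*i+1) h \<union> Fs (2*i+1) h \<union> Fp (2*i+1) h. lev K 1 x" using Suc.IH[OF h1 lk(2)] .
    have "Gs i (Suc h) \<union> Fs i (Suc h) \<union> Fp i (Suc h) \<subseteq>
       (Gs (2*i) h \<union> Fs (2*i) h \<union> Fp (2*i) h) \<union> (Gs (2*i+1) h \<union> Fs (2*i+1) h \<union> Fp (2*i+1) h)"
      using Suc by auto
    thus ?thesis using a b by blast
  qed
qed

lemma lev1_leaf:
  assumes "lev K 1 x" "1 \<le> K"
  shows "is_leaf (VV K) (EE K) x"
proof -
  have xV: "x \<in> VV K" using lev_V assms by blast
  show ?thesis
  proof (cases "K = 1")
    case True
    hence "x = 1" using assms unfolding lev_def by auto
    thus ?thesis using True unfolding is_leaf_def bintree_V_def by auto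
  next
    case False
    then obtain m where m: "K = Suc (Suc m)" using assms by (metis Suc_le_D Suc_le_lessD less_imp_Suc_add One_nat_def add_0_right nat_neq_iff not_less_eq_eq)
    have x1: "2^(Suc m) \<le> x" "x < 2^(Suc (Suc m))" using assms m unfolding lev_def by auto
    have "nbrs (VV K) (EE K) x = {x div 2}"
    proof
      show "nbrs (VV K) (EE K) x \<subseteq> {x div 2}"
      proof
        fix y assume "y \<in> nbrs (VV K) (EE K) x"
        hence "y \<in> {2*x, 2*x+1, x div 2} \<inter> VV K" using nbrs_sub by blast
        moreover have "2*x \<notin> VV K" "2*x+1 \<notin> VV K" using x1 m unfolding bintree_V_def by auto
        ultimately show "y \<in> {x div 2}" by auto
      qed
    next
      have "2^(Suc m) div 2 \<le> x div 2" by (rule div_le_mono[OF x1(1)])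
      hence "2 ^ m \<le> x div 2" by simp
      hence "1 \<le> x div 2" by (metis le_trans one_le_power one_le_numeral)
      moreover have "x div 2 < 2^K" using x1 m by auto
      ultimately have "x div 2 \<in> VV K" unfolding bintree_V_def by auto
      thus "{x div 2} \<subseteq> nbrs (VV K) (EE K) x"
        unfolding nbrs_def bintree_E_def using xV by auto
    qed
    thus ?thesis using xV unfolding is_leaf_def by simp
  qed
qed

lemma cards:
  "1 \<le> h \<Longrightarrow>
    3 * int (card (Gs i h)) \<le> 2^h + (if even h then 2 else 1) \<and>
    3 * int (card (Fs i h)) \<le> 2^h + (if even h then -1 else 1) \<and>
    3 * int (card (Fp i h)) \<le> 2^h + (if even h then -1 else -2)"
proof (induction h arbitrary: i)
  case 0 thus ?case by simp
next
  case (Suc h)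
  show ?case
  proof (cases h)
    case 0 thus ?thesis by simp
  next
    case (Suc h')
    have h1: "1 \<le> h" using Suc by simp
    note a = Suc.IH[OF h1, of "2*i"]
    note b = Suc.IH[OF h1, of "2*i+1"]
    have "card (Gs i (Suc h)) \<le> card (Gs (2*i) h) + card (Fs (2*i+1) h)"
      using Suc by (simp add: card_Un_le)
    moreover have "card (Fs i (Suc h)) \<le> card (Gs (2*i) h) + card (Fp (2*i+1) h)"
      using Suc by (simp add: card_Un_le)
    moreover have "card (Fp i (Suc h)) \<le> card (Fs (2*i) h) + card (Fp (2*i+1) h)"
      using Suc by (simp add: card_Un_le)
    ultimately show ?thesis using a b by (cases "even h") auto
  qed
qed

lemma sub_mono: "sub i h \<subseteq> sub i (Suc h)"
proof (induction h arbitrary: i)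
  case 0 thus ?case by simp
next
  case (Suc h)
  have "sub (2*i) h \<subseteq> sub (2*i) (Suc h)" "sub (2*i+1) h \<subseteq> sub (2*i+1) (Suc h)" using Suc.IH by blast+
  thus ?case unfolding sub.simps(2)[of i h] sub.simps(2)[of i "Suc h"] by blast
qed

lemma sub_double: "y \<in> sub i h \<Longrightarrow> 2*y \<in> sub i (Suc h) \<and> 2*y+1 \<in> sub i (Suc h)"
proof (induction h arbitrary: i)
  case 0 thus ?case by simp
next
  case (Suc h)
  from Suc.prems have "y = i \<or> y \<in> sub (2*i) h \<or> y \<in> sub (2*i+1) h" by simp
  thus ?case
  proof (elim disjE)
    assume "y = i" thus ?thesis by simp
  next
    assume "y \<in> sub (2*i) h" thus ?thesis using Suc.IH[of "2*i"] sub.simps(2)[of i "Suc h"] by blast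
  next
    assume "y \<in> sub (2*i+1) h" thus ?thesis using Suc.IH[of "2*i+1"] sub.simps(2)[of i "Suc h"] by blast
  qed
qed

lemma all_in_sub: "1 \<le> x \<Longrightarrow> x < 2^K \<Longrightarrow> x \<in> sub 1 K"
proof (induction x arbitrary: K rule: less_induct)
  case (less x)
  obtain m where m: "K = Suc m" using less.prems by (cases K) auto
  show ?case
  proof (cases "x = 1")
    case True thus ?thesis using m by simp
  next
    case False
    have "1 \<le> x div 2" "x div 2 < x" "x div 2 < 2^m" using less.prems False m by auto
    hence "x div 2 \<in> sub 1 m" using less.IH by blast
    hence "2*(x div 2) \<in> sub 1 K \<and> 2*(x div 2)+1 \<in> sub 1 K" using sub_double m by blast
    moreover have "x = 2*(x div 2) \<or> x = 2*(x div 2)+1" by auto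
    ultimately show ?thesis by metis
  qed
qed



fun Lset :: "nat \<Rightarrow> nat set" where
  "Lset 0 = {}"
| "Lset (Suc 0) = {1}"
| "Lset (Suc (Suc k)) = {2^(Suc k)..<2^(Suc (Suc k))} \<union> Lset k"

lemma Lsub: "Lset k \<subseteq> {1..<2^k}"
proof (induction k rule: Lset.induct)
  case 1 thus ?case by simp
next
  case 2 thus ?case by simp
next
  case (3 k)
  have "(2::nat)^k \<le> 2^(Suc (Suc k))" by (rule power_increasing) auto
  moreover have "(1::nat) \<le> 2^(Suc k)" by simp
  ultimately show ?case using 3 by auto
qed

lemma Lcard: "3 * int (card (Lset k)) = 2^(k+1) - (if even k then 2 else 1)"
proof (induction k rule: Lset.induct)
  case 1 thus ?case by simp
next
  case 2 thus ?case by simp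
next
  case (3 k)
  have disj: "{2^(Suc k)..<2^(Suc (Suc k))} \<inter> Lset k = {}"
  proof -
    have "(2::nat)^k \<le> 2^(Suc k)" by (rule power_increasing) auto
    thus ?thesis using Lsub[of k] by auto
  qed
  have c1: "card {2^(Suc k)..<(2::nat)^(Suc (Suc k))} = 2^(Suc k)" by simp
  have fin: "finite (Lset k)" using Lsub[of k] by (meson finite_atLeastLessThan finite_subset)
  have "card (Lset (Suc (Suc k))) = 2^(Suc k) + card (Lset k)"
    using card_Un_disjoint[OF _ fin disj] c1 by simp
  hence "3 * int (card (Lset (Suc (Suc k)))) = 3 * 2^(Suc k) + 3 * int (card (Lset k))" by simp
  also have "\<dots> = 3 * 2^(Suc k) + 2^(k+1) - (if even k then 2 else 1)" using 3 by simp
  also have "\<dots> = 2^(Suc (Suc k) + 1) - (if even (Suc (Suc k)) then 2 else 1)" by simp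
  finally show ?case .
qed

lemma Llayer: "x \<in> Lset k \<Longrightarrow> \<exists>d. 2^d \<le> x \<and> x < 2^(Suc d) \<and> d < k \<and> odd (k - d)"
proof (induction k rule: Lset.induct)
  case 1 thus ?case by simp
next
  case 2 thus ?case by (intro exI[of _ 0]) simp
next
  case (3 k)
  show ?case
  proof (cases "x \<in> Lset k")
    case True
    then obtain d where "2^d \<le> x \<and> x < 2^(Suc d) \<and> d < k \<and> odd (k - d)" using 3 by blast
    thus ?thesis by (intro exI[of _ d]) (auto simp: Suc_diff_le)
  next
    case False
    hence "x \<in> {2^(Suc k)..<2^(Suc (Suc k))}" using 3 by simp
    thus ?thesis by (intro exI[of _ "Suc k"]) simp
  qed
qed

lemma layer_unique:
  assumes "2^a \<le> (y::nat)" "y < 2^(Suc a)" "2^b \<le> y" "y < 2^(Suc b)"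
  shows "a = b"
proof (rule ccontr)
  assume "a \<noteq> b"
  hence "Suc a \<le> b \<or> Suc b \<le> a" by auto
  thus False
  proof
    assume "Suc a \<le> b"
    hence "(2::nat)^(Suc a) \<le> 2^b" by (rule power_increasing) auto
    thus False using assms by auto
  next
    assume "Suc b \<le> a"
    hence "(2::nat)^(Suc b) \<le> 2^a" by (rule power_increasing) auto
    thus False using assms by auto
  qed
qed

lemma Lindep: "x \<in> Lset k \<Longrightarrow> y \<in> Lset k \<Longrightarrow> y \<noteq> x div 2"
proof
  assume x: "x \<in> Lset k" and y: "y \<in> Lset k" and eq: "y = x div 2"
  obtain d where d: "2^d \<le> x" "x < 2^(Suc d)" "d < k" "odd (k - d)" using Llayer[OF x] by blast
  obtain d' where d': "2^d' \<le> y" "y < 2^(Suc d')" "d' < k" "odd (k - d')" using Llayer[OF y] by blast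
  have "1 \<le> y" using y Lsub[of k] by auto
  have "d \<noteq> 0"
  proof
    assume "d = 0" hence "x = 1" using d by simp
    thus False using eq \<open>1 \<le> y\<close> by simp
  qed
  then obtain e where e: "d = Suc e" by (cases d) auto
  have "2^(Suc e) div 2 \<le> x div 2" using d(1) e by (intro div_le_mono) simp
  hence l1: "2^e \<le> y" using eq by simp
  have "x < 2^(Suc e) * 2" using d(2) e by (simp add: mult.commute)
  hence l2: "y < 2^(Suc e)" using eq by (simp add: less_mult_imp_div_less)
  have "d' = e" using layer_unique[OF d'(1,2) l1 l2] .
  hence "k - d' = Suc (k - d)" using e d(3) by auto
  thus False using d(4) d'(4) by simp
qed

lemma neg1: "1 \<le> K \<Longrightarrow> ((-1::int)^(K-1)) = (if even K then -1 else 1)"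
  by (cases K) auto



theorem lemma1:
  fixes k :: nat
  assumes "k \<ge> 1"
  shows "prop_leaf_num (bintree_V k) (bintree_E k) = prop_num (bintree_V k) (bintree_E k)
    \<and> real (prop_num (bintree_V k) (bintree_E k)) = (2 ^ k + (-1) ^ (k - 1)) / 3"
proof -
  define K where "K = k"
  have K1: "1 \<le> K" using assms K_def by simp
  define S0 where "S0 = Fs 1 K"
  define c :: int where "c = 2^K + (if even K then -1 else 1)"
  have lK: "lev K K 1" unfolding lev_def by simp
  have r: "reach (VV K) (EE K) S0 (sub 1 K)"
    using main[OF K1 order_refl lK] unfolding S0_def by simp
  have Vs: "VV K \<subseteq> sub 1 K" unfolding bintree_V_def using all_in_sub by auto
  have lv: "\<forall>x\<in>S0. lev K 1 x" using leafsets[OF K1 order_refl lK] unfolding S0_def by blast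
  have leaves: "S0 \<subseteq> {v. is_leaf (VV K) (EE K) v}" using lv lev1_leaf K1 by blast
  hence S0V: "S0 \<subseteq> VV K" unfolding is_leaf_def by blast
  have prop0: "propagates (VV K) (EE K) S0"
  proof -
    obtain P' where p: "(prop_step (VV K) (EE K))\<^sup>*\<^sup>* S0 P'" "sub 1 K \<subseteq> P'"
      using r unfolding reach_def by blast
    have "P' \<subseteq> VV K" using steps_in_V[OF p(1) S0V] .
    hence "P' = VV K" using p(2) Vs by blast
    thus ?thesis unfolding propagates_def using S0V p(1) by simp
  qed
  have up: "3 * int (card S0) \<le> c" using cards[OF K1, of 1] unfolding S0_def c_def by simp
  have low: "c \<le> 3 * int (card S)" if "propagates (VV K) (EE K) S" for S
  proof -
    have fin: "finite (VV K)" unfolding bintree_V_def by simp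
    have IV: "Lset K \<subseteq> VV K" using Lsub[of K] unfolding bintree_V_def by simp
    have ind: "\<forall>x\<in>Lset K. \<forall>y\<in>Lset K. \<not> EE K x y"
      unfolding bintree_E_def using Lindep by metis
    have "card (Lset K) \<le> card S + card (VV K - Lset K)" using lower[OF that fin IV ind] .
    moreover have "card (VV K - Lset K) = card (VV K) - card (Lset K)"
      using IV fin by (simp add: card_Diff_subset finite_subset)
    moreover have "card (VV K) = 2^K - 1" unfolding bintree_V_def by simp
    moreover have "card (Lset K) \<le> card (VV K)" using IV fin by (simp add: card_mono)
    moreover have "(1::nat) \<le> 2^K" by simp
    ultimately have n: "2 * card (Lset K) \<le> card S + (2^K - 1)" by linarith
    hence "int (2 * card (Lset K)) \<le> int (card S + (2^K - 1))" by (simp only: of_nat_le_iff)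
    hence "2 * int (card (Lset K)) \<le> int (card S) + int (2^K - 1)" by (simp only: of_nat_add of_nat_mult of_nat_numeral)
    moreover have "int (2^K - 1) = 2^K - 1" by (simp add: of_nat_diff)
    ultimately have "2 * int (card (Lset K)) \<le> int (card S) + 2^K - 1" by linarith
    moreover have "3 * int (card (Lset K)) = 2^(K+1) - (if even K then 2 else 1)" by (rule Lcard)
    ultimately show ?thesis unfolding c_def by (cases "even K") auto
  qed
  have eq: "3 * int (card S0) = c" using up low[OF prop0] by simp
  have least: "card S0 \<le> card S" if "propagates (VV K) (EE K) S" for S
    using low[OF that] up by simp
  have pn: "prop_num (VV K) (EE K) = card S0"
    unfolding prop_num_def
    by (rule Least_equality) (use prop0 least in auto)
  have pl: "prop_leaf_num (VV K) (EE K) = card S0"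
    unfolding prop_leaf_num_def
    by (rule Least_equality) (use prop0 leaves least in auto)
  have "real (card S0) = real_of_int c / 3" using arg_cong[OF eq, of real_of_int] by simp
  also have "real_of_int c = 2 ^ K + (-1) ^ (K - 1)"
    unfolding c_def using neg1[OF K1] by (cases "even K") (simp_all, metis of_int_1 of_int_minus of_int_power)
  finally show ?thesis using pn pl K_def by simp
qed


end
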